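(* Let $(\mathbf w,\mathbf b)$ be weights and biases of a PNN with architecture $(\mathbf d,\mathbf r)$, and let $\widetilde{\mathbf w}=(\widetilde W_1,\dots,\widetilde W_L)$ with $\widetilde W_\ell=\begin{bmatrix}W_\ell&\mathbf b_\ell\\0&1\end{bmatrix}$ for $\ell<L$ and $\widetilde W_L=\begin{bmatrix}W_L&\mathbf b_L\end{bmatrix}$. If the hPNN representation $p_{\widetilde{\mathbf w}}$ with architecture $((d_0+1,\dots,d_{L-1}+1,d_L),\mathbf r)$ is unique (as an hPNN, among all unstructured weight tuples of that architecture), then the PNN representation $p_{\mathbf w,\mathbf b}$ is unique.
   Context: Work over $\mathbb R$. $\rho_r(z_1,\dots,z_d)=(z_1^r,\dots,z_d^r)$. A PNN with architecture $(\mathbf d,\mathbf r)$, $\mathbf d=(d_0,\dots,d_L)$, $\mathbf r=(r_1,\dots,r_{L-1})$, weights $W_\ell\in\mathbb R^{d_\ell\times d_{\ell-1}}$ and biases $\mathbf b_\ell\in\mathbb R^{d_\ell}$ is $p_{\mathbf w,\mathbf b}=f_L\circ\rho_{r_{L-1}}\circ\cdots\circ\rho_{r_1}\circ f_1$, $f_\ell(\mathbf x)=W_\ell\mathbf x+\mathbf b_\ell$; an hPNN $p_{\mathbf w}$ is the case of zero biases. Two parameter sets are equivalent if there exist permutation matrices $P_\ell$ and invertible diagonal matrices $D_\ell$ ($\ell=1,\dots,L-1$), $P_0=D_0=P_L=D_L=I$, with $W'_\ell=P_\ell D_\ell W_\ell D_{\ell-1}^{-r_{\ell-1}}P_{\ell-1}^T$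 ($D_0^{-r_0}:=I$) and $\mathbf b'_\ell=P_\ell D_\ell\mathbf b_\ell$ for all $\ell$ (for hPNNs, only the weight condition). A (h)PNN representation is unique if every parameter set of the same architecture defining the same function is equivalent to it. *)

theory Defs
  imports Complex_Main
begin

text \<open>
An architecture is a list of widths d = [d_0,...,d_L] (length L+1, L >= 1)
and a list of exponents r = [r_1,...,r_{L-1}] (0-indexed: r!(l-1) is r_l).
Weights are a list of L matrices, W!(l-1) being W_l, represented as functions
nat => nat => real whose entries (i,j) with i < d_l, j < d_{l-1} are the relevant ones.
Biases are a list of L vectors nat => real, b!(l-1) being b_l, relevant on i < d_l.
Vectors in R^n are functions nat => real; only coordinates < n matter on input,
outputs are zero outside the range.
\<close>

definition layer_apply ::
  "nat list \<Rightarrow> nat list \<Rightarrow> (nat \<Rightarrow> nat \<Rightarrow> real) list \<Rightarrow> (nat \<Rightarrow> real) list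
   \<Rightarrow> nat \<Rightarrow> (nat \<Rightarrow> real) \<Rightarrow> (nat \<Rightarrow> real)" where
  "layer_apply d r W b k v =
     (let u = (\<lambda>i. if i < d ! Suc k then (\<Sum>j<d ! k. (W ! k) i j * v j) + (b ! k) i else 0)
      in if Suc k < length d - 1
         then (\<lambda>i. if i < d ! Suc k then u i ^ (r ! k) else 0)
         else u)"

definition pnn_eval ::
  "nat list \<Rightarrow> nat list \<Rightarrow> (nat \<Rightarrow> nat \<Rightarrow> real) list \<Rightarrow> (nat \<Rightarrow> real) list
   \<Rightarrow> (nat \<Rightarrow> real) \<Rightarrow> (nat \<Rightarrow> real)" where
  "pnn_eval d r W b x = fold (layer_apply d r W b) [0..<length d - 1] x"

definition zero_biases :: "nat list \<Rightarrow> (nat \<Rightarrow> real) list" where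
  "zero_biases d = replicate (length d - 1) (\<lambda>_. 0)"

definition hpnn_eval ::
  "nat list \<Rightarrow> nat list \<Rightarrow> (nat \<Rightarrow> nat \<Rightarrow> real) list \<Rightarrow> (nat \<Rightarrow> real) \<Rightarrow> (nat \<Rightarrow> real)" where
  "hpnn_eval d r W = pnn_eval d r W (zero_biases d)"

text \<open>Equivalence: permutation matrices P_l (P_l e_j = e_{pi l j}) and invertible diagonal
 D_l = diag(c l), with P_0 = D_0 = P_L = D_L = I. The matrix identity
 W'_l = P_l D_l W_l D_{l-1}^{-r_{l-1}} P_{l-1}^T (with D_0^{-r_0} = I) and
 b'_l = P_l D_l b_l are written out entrywise.\<close>
definition pnn_equiv ::
  "nat list \<Rightarrow> nat list \<Rightarrow> (nat \<Rightarrow> nat \<Rightarrow> real) list \<Rightarrow> (nat \<Rightarrow> real) list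
   \<Rightarrow> (nat \<Rightarrow> nat \<Rightarrow> real) list \<Rightarrow> (nat \<Rightarrow> real) list \<Rightarrow> bool" where
  "pnn_equiv d r W b W' b' =
    (let L = length d - 1 in
     \<exists>(\<pi>::nat \<Rightarrow> nat \<Rightarrow> nat) (c::nat \<Rightarrow> nat \<Rightarrow> real).
       (\<forall>i. \<pi> 0 i = i) \<and> (\<forall>i. \<pi> L i = i) \<and> (\<forall>i. c 0 i = 1) \<and> (\<forall>i. c L i = 1) \<and>
       (\<forall>l\<in>{1..<L}. bij_betw (\<pi> l) {..<d ! l} {..<d ! l} \<and> (\<forall>i<d ! l. c l i \<noteq> 0)) \<and>
       (\<forall>l\<in>{1..L}. \<forall>i<d ! l. \<forall>j<d ! (l - 1).
          (W' ! (l - 1)) (\<pi> l i) (\<pi> (l - 1) j)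
            = c l i * (W ! (l - 1)) i j / (if l = 1 then 1 else c (l - 1) j ^ (r ! (l - 2)))) \<and>
       (\<forall>l\<in>{1..L}. \<forall>i<d ! l. (b' ! (l - 1)) (\<pi> l i) = c l i * (b ! (l - 1)) i))"

definition hpnn_equiv ::
  "nat list \<Rightarrow> nat list \<Rightarrow> (nat \<Rightarrow> nat \<Rightarrow> real) list \<Rightarrow> (nat \<Rightarrow> nat \<Rightarrow> real) list \<Rightarrow> bool" where
  "hpnn_equiv d r W W' = pnn_equiv d r W (zero_biases d) W' (zero_biases d)"

definition pnn_unique ::
  "nat list \<Rightarrow> nat list \<Rightarrow> (nat \<Rightarrow> nat \<Rightarrow> real) list \<Rightarrow> (nat \<Rightarrow> real) list \<Rightarrow> bool" where
  "pnn_unique d r W b =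
    (\<forall>W' b'. length W' = length d - 1 \<longrightarrow> length b' = length d - 1 \<longrightarrow>
       (\<forall>x. pnn_eval d r W' b' x = pnn_eval d r W b x) \<longrightarrow> pnn_equiv d r W b W' b')"

definition hpnn_unique ::
  "nat list \<Rightarrow> nat list \<Rightarrow> (nat \<Rightarrow> nat \<Rightarrow> real) list \<Rightarrow> bool" where
  "hpnn_unique d r W =
    (\<forall>W'. length W' = length d - 1 \<longrightarrow>
       (\<forall>x. hpnn_eval d r W' x = hpnn_eval d r W x) \<longrightarrow> hpnn_equiv d r W W')"

definition aug_arch :: "nat list \<Rightarrow> nat list" where
  "aug_arch d = map Suc (butlast d) @ [last d]"

text \<open>Augmented weights: [[W_l, b_l],[0, 1]] for l < L and [W_L, b_L] for l = L.\<close>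
definition aug_weights ::
  "nat list \<Rightarrow> (nat \<Rightarrow> nat \<Rightarrow> real) list \<Rightarrow> (nat \<Rightarrow> real) list \<Rightarrow> (nat \<Rightarrow> nat \<Rightarrow> real) list" where
  "aug_weights d W b = map (\<lambda>k. \<lambda>i j.
      if i < d ! Suc k then
        (if j < d ! k then (W ! k) i j else if j = d ! k then (b ! k) i else 0)
      else if Suc k < length d - 1 \<and> i = d ! Suc k \<and> j = d ! k then 1 else 0)
    [0..<length d - 1]"

end

theory Submission
  imports Defs
begin

definition fp where "fp d r W b k x = fold (layer_apply d r W b) [0..<k] x"

lemma fp_0[simp]: "fp d r W b 0 x = x" by (simp add: fp_def)
lemma fp_Suc: "fp d r W b (Suc k) x = layer_apply d r W b k (fp d r W b k x)"
  by (simp add: fp_def)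
lemma pnn_fp: "pnn_eval d r W b x = fp d r W b (length d - 1) x"
  by (simp add: fp_def pnn_eval_def)
lemma hpnn_fp: "hpnn_eval d r W x = fp d r W (zero_biases d) (length d - 1) x"
  by (simp add: fp_def pnn_eval_def hpnn_eval_def)

lemma aug_len: "d \<noteq> [] \<Longrightarrow> length (aug_arch d) = length d"
  by (simp add: aug_arch_def)
lemma aug_nth: "k < length d - 1 \<Longrightarrow> aug_arch d ! k = Suc (d!k)"
  by (simp add: aug_arch_def nth_append nth_butlast)
lemma aug_last: "d \<noteq> [] \<Longrightarrow> aug_arch d ! (length d - 1) = d ! (length d - 1)"
  by (simp add: aug_arch_def nth_append last_conv_nth)
lemma augw_len[simp]: "length (aug_weights d W b) = length d - 1"
  by (simp add: aug_weights_def)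
lemma augw_nth: "k < length d - 1 \<Longrightarrow> aug_weights d W b ! k = (\<lambda>i j.
      if i < d ! Suc k then
        (if j < d ! k then (W ! k) i j else if j = d ! k then (b ! k) i else 0)
      else if Suc k < length d - 1 \<and> i = d ! Suc k \<and> j = d ! k then 1 else 0)"
proof -
  assume "k < length d - 1"
  then have e: "[0..<length d - 1] ! k = k" by simp
  show ?thesis unfolding aug_weights_def using \<open>k < length d - 1\<close> by (simp only: nth_map length_upt e)
qed
lemma zb_nth: "k < length d - 1 \<Longrightarrow> zero_biases d ! k = (\<lambda>_. 0)"
  by (simp add: zero_biases_def)

lemma fp_cont:
  assumes "\<And>j. (\<lambda>n. X n j) \<longlonglongrightarrow> x j"
  shows "(\<lambda>n. fp d r W b k (X n) i) \<longlonglongrightarrow> fp d r W b k x i"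
  using assms
proof (induction k arbitrary: i)
  case 0 then show ?case by simp
next
  case (Suc k)
  have IH: "\<And>j. (\<lambda>n. fp d r W b k (X n) j) \<longlonglongrightarrow> fp d r W b k x j" using Suc by blast
  show ?case unfolding fp_Suc layer_apply_def Let_def
    by (auto intro!: tendsto_intros IH)
qed

fun Tp :: "nat list \<Rightarrow> real \<Rightarrow> nat \<Rightarrow> real" where
  "Tp r t 0 = t" | "Tp r t (Suc k) = Tp r t k ^ (r ! k)"

lemma hom:
  assumes d2: "length d \<ge> 2" and t: "t \<noteq> 0" and xt: "xt (d!0) = t"
    and k: "k < length d - 1"
  shows "(\<forall>i<d!k. fp (aug_arch d) r (aug_weights d W b) (zero_biases (aug_arch d)) k xt i
           = Tp r t k * fp d r W b k (\<lambda>j. xt j / t) i)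
      \<and> fp (aug_arch d) r (aug_weights d W b) (zero_biases (aug_arch d)) k xt (d!k) = Tp r t k"
  using k
proof (induction k)
  case 0 then show ?case using t xt by simp
next
  case (Suc k)
  let ?F = "fp (aug_arch d) r (aug_weights d W b) (zero_biases (aug_arch d)) k xt"
  let ?G = "fp d r W b k (\<lambda>j. xt j / t)"
  have dne: "d \<noteq> []" using d2 by auto
  have k: "k < length d - 1" "Suc k < length d - 1" using Suc by auto
  have IH1: "\<And>i. i < d!k \<Longrightarrow> ?F i = Tp r t k * ?G i" and IH2: "?F (d!k) = Tp r t k"
    using Suc k by auto
  have s1: "(\<Sum>j<aug_arch d ! k. (aug_weights d W b ! k) i j * ?F j) =
     Tp r t k * ((\<Sum>j<d ! k. (W ! k) i j * ?G j) + (b ! k) i)" if "i < d ! Suc k" for i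
  proof -
    have "(\<Sum>j<d!k. (aug_weights d W b ! k) i j * ?F j) = (\<Sum>j<d!k. Tp r t k * ((W ! k) i j * ?G j))"
      using that k IH1 by (intro sum.cong) (auto simp: augw_nth)
    then show ?thesis using that k IH2
      by (simp add: aug_nth augw_nth sum_distrib_left algebra_simps)
  qed
  have s2: "(\<Sum>j<aug_arch d ! k. (aug_weights d W b ! k) (d ! Suc k) j * ?F j) = Tp r t k"
    using k IH2 by (simp add: aug_nth augw_nth)
  show ?case
    unfolding fp_Suc layer_apply_def Let_def
    using k s1 s2 dne
    by (simp add: aug_nth aug_len zb_nth power_mult_distrib)
qed

lemma hom_out:
  assumes d2: "length d \<ge> 2" and t: "t \<noteq> 0" and xt: "xt (d!0) = t"
  shows "hpnn_eval (aug_arch d) r (aug_weights d W b) xt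
       = (\<lambda>i. Tp r t (length d - 2) * pnn_eval d r W b (\<lambda>j. xt j / t) i)"
proof -
  define m where "m = length d - 2"
  have L: "length d - 1 = Suc m" using d2 unfolding m_def by auto
  have dne: "d \<noteq> []" using d2 by auto
  have m: "m < length d - 1" using L by simp
  let ?F = "fp (aug_arch d) r (aug_weights d W b) (zero_biases (aug_arch d)) m xt"
  let ?G = "fp d r W b m (\<lambda>j. xt j / t)"
  have H1: "\<And>i. i < d!m \<Longrightarrow> ?F i = Tp r t m * ?G i" and H2: "?F (d!m) = Tp r t m"
    using hom[where d=d and t=t and xt=xt and k=m and r=r and W=W and b=b, OF d2 t xt m] by auto
  have s1: "(\<Sum>j<aug_arch d ! m. (aug_weights d W b ! m) i j * ?F j) =
     Tp r t m * ((\<Sum>j<d ! m. (W ! m) i j * ?G j) + (b ! m) i)" if "i < d ! Suc m" for i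
  proof -
    have "(\<Sum>j<d!m. (aug_weights d W b ! m) i j * ?F j) = (\<Sum>j<d!m. Tp r t m * ((W ! m) i j * ?G j))"
      using that m H1 by (intro sum.cong) (auto simp: augw_nth)
    then show ?thesis using that m H2
      by (simp add: aug_nth augw_nth sum_distrib_left algebra_simps)
  qed
  have al: "aug_arch d ! Suc m = d ! Suc m" using aug_last[OF dne] L by simp
  show ?thesis
    unfolding hpnn_fp pnn_fp aug_len[OF dne] L fp_Suc layer_apply_def Let_def
    using s1 m L
    by (auto simp: aug_len[OF dne] zb_nth al m_def[symmetric])
qed

lemma func_eq:
  assumes d2: "length d \<ge> 2"
    and eq: "\<And>x. pnn_eval d r W' b' x = pnn_eval d r W b x"
  shows "hpnn_eval (aug_arch d) r (aug_weights d W' b') xt = hpnn_eval (aug_arch d) r (aug_weights d W b) xt"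
proof (cases "xt (d!0) = 0")
  case False
  show ?thesis using hom_out[where d=d and xt=xt and t="xt (d!0)", OF d2 False refl] hom_out[where d=d and xt=xt and t="xt (d!0)" and W=W' and b=b', OF d2 False refl] eq by simp
next
  case True
  define X where "X n = xt(d!0 := 1 / real (Suc n))" for n
  have X: "(\<lambda>n. X n j) \<longlonglongrightarrow> xt j" for j
  proof (cases "j = d!0")
    case True
    then show ?thesis using \<open>xt (d!0) = 0\<close> unfolding X_def
      using LIMSEQ_Suc[OF lim_inverse_n'] by (simp add: divide_inverse)
  next
    case False then show ?thesis unfolding X_def by simp
  qed
  have Xn: "X n (d!0) \<noteq> 0" for n unfolding X_def by simp
  have eqn: "hpnn_eval (aug_arch d) r (aug_weights d W' b') (X n) = hpnn_eval (aug_arch d) r (aug_weights d W b) (X n)" for n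
    using hom_out[where d=d and xt="X n" and t="X n (d!0)", OF d2 Xn refl] hom_out[where d=d and xt="X n" and t="X n (d!0)" and W=W' and b=b', OF d2 Xn refl] eq by simp
  show ?thesis
  proof
    fix i
    have l1: "(\<lambda>n. hpnn_eval (aug_arch d) r (aug_weights d W' b') (X n) i) \<longlonglongrightarrow> hpnn_eval (aug_arch d) r (aug_weights d W' b') xt i"
      unfolding hpnn_fp by (rule fp_cont[OF X])
    have l2: "(\<lambda>n. hpnn_eval (aug_arch d) r (aug_weights d W b) (X n) i) \<longlonglongrightarrow> hpnn_eval (aug_arch d) r (aug_weights d W b) xt i"
      unfolding hpnn_fp by (rule fp_cont[OF X])
    show "hpnn_eval (aug_arch d) r (aug_weights d W' b') xt i = hpnn_eval (aug_arch d) r (aug_weights d W b) xt i"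
      using l1 l2 eqn LIMSEQ_unique by (metis (no_types, lifting) ext)
  qed
qed



locale eqsetup =
  fixes d r :: "nat list" and A A' :: "(nat \<Rightarrow> nat \<Rightarrow> real) list"
    and \<pi> :: "nat \<Rightarrow> nat \<Rightarrow> nat" and c :: "nat \<Rightarrow> nat \<Rightarrow> real" and L :: nat
  assumes d2: "length d \<ge> 2" and Ldef: "L = length d - 1"
    and P0: "\<forall>i. \<pi> 0 i = i" and PL: "\<forall>i. \<pi> L i = i"
    and C0: "\<forall>i. c 0 i = 1" and CL: "\<forall>i. c L i = 1"
    and B: "\<forall>l\<in>{1..<L}. bij_betw (\<pi> l) {..<aug_arch d ! l} {..<aug_arch d ! l} \<and> (\<forall>i<aug_arch d ! l. c l i \<noteq> 0)"
    and Wt: "\<forall>l\<in>{1..L}. \<forall>i<aug_arch d ! l. \<forall>j<aug_arch d ! (l - 1).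
          (A' ! (l - 1)) (\<pi> l i) (\<pi> (l - 1) j)
            = c l i * (A ! (l - 1)) i j / (if l = 1 then 1 else c (l - 1) j ^ (r ! (l - 2)))"

lemma hpnn_equiv_setup:
  assumes "length d \<ge> 2" "hpnn_equiv (aug_arch d) r A A'"
  shows "\<exists>\<pi> c. eqsetup d r A A' \<pi> c (length d - 1)"
proof -
  have dne: "d \<noteq> []" using assms by auto
  show ?thesis using assms(2) unfolding hpnn_equiv_def pnn_equiv_def Let_def aug_len[OF dne] eqsetup_def
    using assms(1) by blast
qed

context eqsetup begin

definition den where "den k j = (if k = 0 then 1 else c k j ^ (r ! (k - 1)))"

lemma dne: "d \<noteq> []" using d2 by auto
lemma L1: "L \<ge> 1" using d2 Ldef by auto

lemma bijall: "l \<le> L \<Longrightarrow> bij_betw (\<pi> l) {..<aug_arch d ! l} {..<aug_arch d ! l}"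
proof -
  assume l: "l \<le> L"
  consider "l = 0" | "l = L" | "l \<in> {1..<L}" using l by fastforce
  then show ?thesis
  proof cases
    case 1
    have "\<pi> l = id" using P0 1 by auto
    then show ?thesis by simp
  next
    case 2
    have "\<pi> l = id" using PL 2 by auto
    then show ?thesis by simp
  next
    case 3 then show ?thesis using B by blast
  qed
qed

lemma cnz: "l \<le> L \<Longrightarrow> i < aug_arch d ! l \<Longrightarrow> c l i \<noteq> 0"
proof -
  assume l: "l \<le> L" and i: "i < aug_arch d ! l"
  consider "l = 0" | "l = L" | "l \<in> {1..<L}" using l by fastforce
  then show ?thesis using C0 CL B i by cases auto
qed

lemma den_nz: "k < L \<Longrightarrow> j < aug_arch d ! k \<Longrightarrow> den k j \<noteq> 0"
  unfolding den_def using cnz by auto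

lemma Wt': "k < L \<Longrightarrow> i < aug_arch d ! Suc k \<Longrightarrow> j < aug_arch d ! k \<Longrightarrow>
   (A' ! k) (\<pi> (Suc k) i) (\<pi> k j) = c (Suc k) i * (A ! k) i j / den k j"
proof -
  assume k: "k < L" and i: "i < aug_arch d ! Suc k" and j: "j < aug_arch d ! k"
  have "Suc k \<in> {1..L}" using k by auto
  then have "(A' ! (Suc k - 1)) (\<pi> (Suc k) i) (\<pi> (Suc k - 1) j)
            = c (Suc k) i * (A ! (Suc k - 1)) i j / (if Suc k = 1 then 1 else c (Suc k - 1) j ^ (r ! (Suc k - 2)))"
    using Wt i j by (metis diff_Suc_1)
  then show ?thesis unfolding den_def
    by (cases k) auto
qed

lemma Wt'': "k < L \<Longrightarrow> i < aug_arch d ! Suc k \<Longrightarrow> j < aug_arch d ! k \<Longrightarrow>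
   (A ! k) i j = (A' ! k) (\<pi> (Suc k) i) (\<pi> k j) * den k j / c (Suc k) i"
  using Wt' den_nz cnz[of "Suc k" i] by simp

end

locale eqaug = eqsetup d r "aug_weights d W b" "aug_weights d W' b'" \<pi> c L for d r W b W' b' \<pi> c L
begin

abbreviation "F \<equiv> fp (aug_arch d) r (aug_weights d W b) (zero_biases (aug_arch d))"

lemma lenaug: "length (aug_arch d) - 1 = L" using aug_len[OF dne] Ldef by simp

lemma chain: "l < L \<Longrightarrow> \<exists>i < aug_arch d ! l. \<pi> l i = d ! l \<and>
   (\<exists>\<gamma>. \<gamma> \<noteq> 0 \<and> (\<forall>x. F l x i = \<gamma> * F l x (d ! l)))"
proof (induction l)
  case 0
  have "d ! 0 < aug_arch d ! 0" using aug_nth[of 0 d] Ldef L1 by simp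
  moreover have "\<exists>\<gamma>::real. \<gamma> \<noteq> 0 \<and> (\<forall>x. F 0 x (d!0) = \<gamma> * F 0 x (d!0))"
    by (rule exI[of _ 1]) simp
  ultimately show ?case using P0 by blast
next
  case (Suc l)
  have l: "l < L" "Suc l < L" using Suc by auto
  from Suc.IH l obtain i \<gamma> where i: "i < aug_arch d ! l" "\<pi> l i = d ! l" and g: "\<gamma> \<noteq> 0"
     and rel: "\<And>x. F l x i = \<gamma> * F l x (d ! l)" by blast
  have bs: "bij_betw (\<pi> (Suc l)) {..<aug_arch d ! Suc l} {..<aug_arch d ! Suc l}" using bijall l by simp
  have bl: "bij_betw (\<pi> l) {..<aug_arch d ! l} {..<aug_arch d ! l}" using bijall l by simp
  have ds: "aug_arch d ! Suc l = Suc (d ! Suc l)" "aug_arch d ! l = Suc (d ! l)" using aug_nth Ldef l by auto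
  have "d ! Suc l \<in> \<pi> (Suc l) ` {..<aug_arch d ! Suc l}" using bs ds unfolding bij_betw_def by auto
  then obtain i' where i': "i' < aug_arch d ! Suc l" "\<pi> (Suc l) i' = d ! Suc l" by auto
  define \<alpha> where "\<alpha> = den l i / c (Suc l) i'"
  have anz: "\<alpha> \<noteq> 0" unfolding \<alpha>_def using den_nz[OF l(1) i(1)] cnz[of "Suc l" i'] i' l by simp
  have row: "(aug_weights d W b ! l) i' j = (if j = i then \<alpha> else 0)" if j: "j < aug_arch d ! l" for j
  proof -
    have pj: "\<pi> l j < aug_arch d ! l" using bl j unfolding bij_betw_def by auto
    have eqv: "(\<pi> l j = d ! l) = (j = i)" using bl j i unfolding bij_betw_def inj_on_def by auto
    have "(aug_weights d W' b' ! l) (d ! Suc l) (\<pi> l j) = (if j = i then 1 else 0)"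
      using l eqv Ldef by (simp add: augw_nth)
    then show ?thesis using Wt''[OF l(1) i'(1) j] i' unfolding \<alpha>_def by auto
  qed
  have row2: "(aug_weights d W b ! l) (d ! Suc l) j = (if j = d ! l then 1 else 0)" if j: "j < aug_arch d ! l" for j
    using l Ldef by (simp add: augw_nth)
  have s1: "(\<Sum>j<aug_arch d ! l. (aug_weights d W b ! l) i' j * v j) = \<alpha> * v i" for v
  proof -
    have "(\<Sum>j<aug_arch d ! l. (aug_weights d W b ! l) i' j * v j) = (\<Sum>j<aug_arch d ! l. if j = i then \<alpha> * v i else 0)"
      using row by (intro sum.cong) auto
    then show ?thesis using i(1) by simp
  qed
  have s2: "(\<Sum>j<aug_arch d ! l. (aug_weights d W b ! l) (d ! Suc l) j * v j) = v (d ! l)" for v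
  proof -
    have "(\<Sum>j<aug_arch d ! l. (aug_weights d W b ! l) (d ! Suc l) j * v j) = (\<Sum>j<aug_arch d ! l. if j = d ! l then v (d ! l) else 0)"
      using row2 by (intro sum.cong) auto
    then show ?thesis using ds by simp
  qed
  have dsl: "d ! Suc l < aug_arch d ! Suc l" using ds by simp
  have "F (Suc l) x i' = (\<alpha> * \<gamma>) ^ r ! l * F (Suc l) x (d ! Suc l)" for x
    unfolding fp_Suc layer_apply_def Let_def
    using s1 s2 i' dsl l lenaug rel by (simp add: zb_nth power_mult_distrib)
  moreover have "(\<alpha> * \<gamma>) ^ (r ! l) \<noteq> 0" using anz g by simp
  ultimately show ?case using i' by blast
qed

end


context eqsetup begin

lemma zc: "card {j. j < aug_arch d ! (L-1) \<and> (\<forall>k<d!L. (A!(L-1)) k j = 0)}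
         = card {j. j < aug_arch d ! (L-1) \<and> (\<forall>k<d!L. (A'!(L-1)) k j = 0)}"
proof -
  define m where "m = L - 1"
  have m: "m < L" "Suc m = L" using L1 unfolding m_def by auto
  have dL: "aug_arch d ! L = d ! L" using aug_last[OF dne] Ldef by simp
  have bm: "bij_betw (\<pi> m) {..<aug_arch d ! m} {..<aug_arch d ! m}" using bijall m by simp
  have key: "(A ! m) k j = 0 \<longleftrightarrow> (A' ! m) k (\<pi> m j) = 0" if "k < d!L" "j < aug_arch d ! m" for k j
  proof -
    have "(A ! m) k j = (A' ! m) (\<pi> (Suc m) k) (\<pi> m j) * den m j / c (Suc m) k"
      using Wt''[OF m(1), of k j] that m dL by simp
    then show ?thesis using PL CL m den_nz[OF m(1) that(2)] by simp
  qed
  let ?ZA = "{j. j < aug_arch d ! m \<and> (\<forall>k<d!L. (A!m) k j = 0)}"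
  let ?ZB = "{j. j < aug_arch d ! m \<and> (\<forall>k<d!L. (A'!m) k j = 0)}"
  have "?ZB = \<pi> m ` ?ZA"
  proof
    show "\<pi> m ` ?ZA \<subseteq> ?ZB" using key bm unfolding bij_betw_def by auto
  next
    show "?ZB \<subseteq> \<pi> m ` ?ZA"
    proof
      fix j' assume j': "j' \<in> ?ZB"
      then obtain j where j: "j < aug_arch d ! m" "j' = \<pi> m j" using bm unfolding bij_betw_def
        by (metis (no_types, lifting) imageE lessThan_iff mem_Collect_eq)
      then show "j' \<in> \<pi> m ` ?ZA" using key j' by auto
    qed
  qed
  moreover have "inj_on (\<pi> m) ?ZA" using bm unfolding bij_betw_def by (elim conjE inj_on_subset) auto
  ultimately show ?thesis unfolding m_def[symmetric] by (simp add: card_image)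
qed

end

lemma fp_congW: "(\<And>k'. k' < k \<Longrightarrow> W1 ! k' = W2 ! k') \<Longrightarrow> fp d r W1 b k x = fp d r W2 b k x"
  by (induction k) (auto simp: fp_Suc layer_apply_def)



lemma get_setup:
  assumes d2: "length d \<ge> 2" and uniq: "hpnn_unique (aug_arch d) r A"
    and len: "length N = length d - 1"
    and eq: "\<And>x. hpnn_eval (aug_arch d) r N x = hpnn_eval (aug_arch d) r A x"
  shows "\<exists>\<pi> c. eqsetup d r A N \<pi> c (length d - 1)"
proof -
  have dne: "d \<noteq> []" using d2 by auto
  have "hpnn_equiv (aug_arch d) r A N"
    using uniq len eq unfolding hpnn_unique_def aug_len[OF dne] by blast
  then show ?thesis using hpnn_equiv_setup d2 by blast
qed

lemma hpnn_last:
  assumes d2: "length d \<ge> 2" and lN: "length N = length d - 1"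
  shows "hpnn_eval (aug_arch d) r N x = (\<lambda>k. if k < d ! (length d - 1) then
     (\<Sum>j<aug_arch d ! (length d - 2). (N ! (length d - 2)) k j *
        fp (aug_arch d) r N (zero_biases (aug_arch d)) (length d - 2) x j) else 0)"
proof -
  have dne: "d \<noteq> []" using d2 by auto
  have L: "length d - 1 = Suc (length d - 2)" using d2 by auto
  have al: "aug_arch d ! Suc (length d - 2) = d ! (length d - 1)" using aug_last[OF dne] L by simp
  show ?thesis unfolding hpnn_fp aug_len[OF dne] L fp_Suc layer_apply_def Let_def
    using L al by (auto simp: zb_nth aug_len[OF dne])
qed

lemma no_fail:
  assumes d2: "length d \<ge> 2" and uniq: "hpnn_unique (aug_arch d) r (aug_weights d W b)"
    and L2: "length d - 1 \<ge> 2"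
    and i: "i < aug_arch d ! (length d - 2)" "i \<noteq> d ! (length d - 2)"
    and g: "\<gamma> \<noteq> 0"
    and rel: "\<And>x. fp (aug_arch d) r (aug_weights d W b) (zero_biases (aug_arch d)) (length d - 2) x i
          = \<gamma> * fp (aug_arch d) r (aug_weights d W b) (zero_biases (aug_arch d)) (length d - 2) x (d ! (length d - 2))"
  shows False
proof -
  define L where "L = length d - 1"
  define m where "m = length d - 2"
  define A where "A = aug_weights d W b"
  define n where "n = d ! L"
  define D where "D = d ! m"
  have dne: "d \<noteq> []" using d2 by auto
  have Lm: "L = Suc m" "m < L" "1 < L" using L2 unfolding L_def m_def by auto
  have lA: "length A = L" unfolding A_def L_def by simp
  have dm: "aug_arch d ! m = Suc D" using aug_nth[of m d] Lm unfolding L_def D_def by simp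
  have iD: "i < D" using i dm unfolding m_def D_def by auto
  show False
  proof (cases "n = 0")
    case True
    define N where "N = replicate L (\<lambda>(k::nat) (j::nat). 0::real)"
    have lN: "length N = length d - 1" unfolding N_def L_def by simp
    have "hpnn_eval (aug_arch d) r N x = hpnn_eval (aug_arch d) r A x" for x
      using hpnn_last[OF d2 lN] hpnn_last[OF d2, of A] lA True unfolding n_def L_def by simp
    then obtain \<pi> c where es: "eqsetup d r A N \<pi> c L"
      using get_setup[OF d2 uniq[folded A_def] lN] unfolding L_def by blast
    have a0: "aug_arch d ! 0 = Suc (d!0)" "aug_arch d ! Suc 0 = Suc (d!1)"
      using aug_nth[of 0 d] aug_nth[of 1 d] Lm unfolding L_def by auto
    have "(A ! 0) (d!1) (d!0) = (N ! 0) (\<pi> (Suc 0) (d!1)) (\<pi> 0 (d!0)) * eqsetup.den r c 0 (d!0) / c (Suc 0) (d!1)"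
      using eqsetup.Wt''[OF es, of 0 "d!1" "d!0"] a0 Lm by simp
    moreover have "(A ! 0) (d!1) (d!0) = 1" unfolding A_def using Lm by (simp add: augw_nth L_def)
    moreover have "N ! 0 = (\<lambda>k j. 0)" unfolding N_def using Lm by simp
    ultimately show False by simp
  next
    case False
    define s where "s k = (A ! m) k D + \<gamma> * (A ! m) k i" for k
    define M where "M w = (\<lambda>k j. if j = i then w k else if j = D then s k - \<gamma> * w k else (A ! m) k j)" for w :: "nat \<Rightarrow> real"
    define WW where "WW w = A[m := M w]" for w
    have lWW: "length (WW w) = length d - 1" for w unfolding WW_def using lA L_def by simp
    have WWm: "WW w ! m = M w" for w unfolding WW_def using lA Lm by simp
    have fpeq: "fp (aug_arch d) r (WW w) (zero_biases (aug_arch d)) m x = fp (aug_arch d) r A (zero_biases (aug_arch d)) m x" for w x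
      by (rule fp_congW) (simp add: WW_def)
    have sumeq: "(\<Sum>j<aug_arch d ! m. M w k j * v j) = (\<Sum>j<aug_arch d ! m. (A!m) k j * v j)"
      if vi: "v i = \<gamma> * v D" for w k v
    proof -
      have "(\<Sum>j<aug_arch d ! m. M w k j * v j) = (\<Sum>j<aug_arch d ! m. (A!m) k j * v j
           + (if j = i then (w k - (A!m) k i) * v i else 0) + (if j = D then \<gamma> * ((A!m) k i - w k) * v j else 0))"
        using iD by (intro sum.cong) (auto simp: M_def s_def algebra_simps)
      also have "\<dots> = (\<Sum>j<aug_arch d ! m. (A!m) k j * v j) + (w k - (A!m) k i) * v i + \<gamma> * ((A!m) k i - w k) * v D"
        using iD dm by (simp add: sum.distrib)
      also have "\<dots> = (\<Sum>j<aug_arch d ! m. (A!m) k j * v j)" using vi by (simp add: algebra_simps)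
      finally show ?thesis .
    qed
    have heq: "hpnn_eval (aug_arch d) r (WW w) x = hpnn_eval (aug_arch d) r A x" for w x
    proof -
      let ?v = "fp (aug_arch d) r A (zero_biases (aug_arch d)) m x"
      have vi: "?v i = \<gamma> * ?v D" using rel unfolding m_def A_def D_def by simp
      show ?thesis
        unfolding hpnn_last[OF d2 lWW] hpnn_last[OF d2 lA[unfolded L_def]] m_def[symmetric]
        unfolding fpeq WWm sumeq[OF vi] ..
    qed
    define Z where "Z N = {j. j < aug_arch d ! (L-1) \<and> (\<forall>k<d!L. (N!(L-1)) k j = 0)}" for N :: "(nat \<Rightarrow> nat \<Rightarrow> real) list"
    have cardeq: "card (Z (WW w)) = card (Z A)" for w
    proof -
      obtain \<pi> c where es: "eqsetup d r A (WW w) \<pi> c L"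
        using get_setup[OF d2 uniq[folded A_def] lWW heq] unfolding L_def by blast
      show ?thesis using eqsetup.zc[OF es] unfolding Z_def by simp
    qed
    define w0 where "w0 = (\<lambda>k::nat. 0::real)"
    define w1 where "w1 = (\<lambda>k. if (\<forall>k'<n. s k' = 0) then (if k = 0 then 1 else 0) else s k / (2 * \<gamma>))"
    have Lm1: "L - 1 = m" using Lm by simp
    have sub: "Z (WW w1) \<subseteq> Z (WW w0) - {i}"
    proof
      fix j assume j: "j \<in> Z (WW w1)"
      then have jl: "j < aug_arch d ! m" and z: "\<And>k. k < n \<Longrightarrow> M w1 k j = 0"
        unfolding Z_def Lm1 WWm n_def by auto
      have "j \<noteq> i \<and> j \<noteq> D"
      proof (cases "\<forall>k'<n. s k' = 0")
        case True
        have "M w1 0 i \<noteq> 0" "M w1 0 D \<noteq> 0" using True iD g False unfolding M_def w1_def by auto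
        then show ?thesis using z False by auto
      next
        case F2: False
        then obtain k where k: "k < n" "s k \<noteq> 0" by auto
        have "M w1 k i \<noteq> 0" "M w1 k D \<noteq> 0" using F2 k iD g unfolding M_def w1_def by auto
        then show ?thesis using z k by auto
      qed
      then show "j \<in> Z (WW w0) - {i}" using j jl z unfolding Z_def Lm1 WWm M_def by auto
    qed
    have iin: "i \<in> Z (WW w0)" unfolding Z_def Lm1 WWm M_def w0_def using iD dm by auto
    have fin: "finite (Z (WW w0))" unfolding Z_def by simp
    have "card (Z (WW w1)) < card (Z (WW w0))"
    proof -
      have "Z (WW w1) \<subset> Z (WW w0)" using sub iin by blast
      then show ?thesis by (rule psubset_card_mono[OF fin])
    qed
    then show False using cardeq by simp
  qed
qed



lemma bij_restrict:
  assumes "bij_betw f {..<Suc n} {..<Suc n}" "f n = n"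
  shows "bij_betw f {..<n} {..<n}"
proof -
  have "bij_betw f {n} {n}" using assms(2) by (simp add: bij_betw_def)
  from bij_betw_DiffI[OF assms(1) this] have "bij_betw f ({..<Suc n} - {n}) ({..<Suc n} - {n})" by auto
  moreover have "{..<Suc n} - {n} = {..<n}" by auto
  ultimately show ?thesis by simp
qed

context eqaug begin

lemma prop_down: "l < L - 1 \<Longrightarrow> \<pi> (Suc l) (d ! Suc l) = d ! Suc l \<Longrightarrow> \<pi> l (d ! l) = d ! l"
proof -
  assume l: "l < L - 1" and f: "\<pi> (Suc l) (d ! Suc l) = d ! Suc l"
  have k: "l < L" "Suc l < L" using l by auto
  have ds: "aug_arch d ! Suc l = Suc (d ! Suc l)" "aug_arch d ! l = Suc (d ! l)" using aug_nth Ldef k by auto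
  have "(aug_weights d W' b' ! l) (\<pi> (Suc l) (d ! Suc l)) (\<pi> l (d ! l))
      = c (Suc l) (d ! Suc l) * (aug_weights d W b ! l) (d ! Suc l) (d ! l) / den l (d ! l)"
    using Wt'[OF k(1)] ds by simp
  moreover have "(aug_weights d W b ! l) (d ! Suc l) (d ! l) = 1" using k Ldef by (simp add: augw_nth)
  moreover have "c (Suc l) (d ! Suc l) \<noteq> 0" using cnz[of "Suc l" "d ! Suc l"] k ds by simp
  moreover have "den l (d ! l) \<noteq> 0" using den_nz[OF k(1)] ds by simp
  ultimately have "(aug_weights d W' b' ! l) (d ! Suc l) (\<pi> l (d ! l)) \<noteq> 0" using f by simp
  then show ?thesis using k Ldef by (simp add: augw_nth split: if_splits)
qed

lemma fix_all: "\<pi> (L - 1) (d ! (L - 1)) = d ! (L - 1) \<Longrightarrow> l < L \<Longrightarrow> \<pi> l (d ! l) = d ! l"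
proof -
  assume top: "\<pi> (L - 1) (d ! (L - 1)) = d ! (L - 1)" and l: "l < L"
  have "l \<le> L - 1" using l by simp
  then show ?thesis
  proof (induction rule: inc_induct)
    case base then show ?case using top .
  next
    case (step n) then show ?case using prop_down by simp
  qed
qed

lemma c_one: "(\<And>l. l < L \<Longrightarrow> \<pi> l (d ! l) = d ! l) \<Longrightarrow> l < L \<Longrightarrow> c l (d ! l) = 1"
proof (induction l)
  case 0 then show ?case using C0 by simp
next
  case (Suc l)
  have k: "l < L" "Suc l < L" using Suc by auto
  have ds: "aug_arch d ! Suc l = Suc (d ! Suc l)" "aug_arch d ! l = Suc (d ! l)" using aug_nth Ldef k by auto
  have IH: "c l (d ! l) = 1" using Suc k by simp
  have "(aug_weights d W' b' ! l) (\<pi> (Suc l) (d ! Suc l)) (\<pi> l (d ! l))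
      = c (Suc l) (d ! Suc l) * (aug_weights d W b ! l) (d ! Suc l) (d ! l) / den l (d ! l)"
    using Wt'[OF k(1)] ds by simp
  moreover have "(aug_weights d W b ! l) (d ! Suc l) (d ! l) = 1" using k Ldef by (simp add: augw_nth)
  moreover have "(aug_weights d W' b' ! l) (d ! Suc l) (d ! l) = 1" using k Ldef by (simp add: augw_nth)
  moreover have "den l (d ! l) = 1" using IH unfolding den_def by simp
  ultimately show ?case using Suc.prems k by simp
qed

lemma to_pnn_equiv:
  assumes fx: "\<And>l. l < L \<Longrightarrow> \<pi> l (d ! l) = d ! l"
  shows "pnn_equiv d r W b W' b'"
proof -
  have cone: "\<And>l. l < L \<Longrightarrow> c l (d ! l) = 1" using c_one fx by blast
  have maps: "\<pi> l i < d ! l" if lL: "l \<le> L" and iL: "i < d ! l" for l i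
  proof -
    consider "l = 0" | "l = L" | "l \<in> {1..<L}" using lL by fastforce
    then show ?thesis
    proof cases
      case 3
      have "bij_betw (\<pi> l) {..<d!l} {..<d!l}"
        using bij_restrict[of "\<pi> l" "d!l"] bijall[of l] aug_nth[of l d] fx[of l] 3 Ldef by auto
      then show ?thesis using iL unfolding bij_betw_def by auto
    qed (use iL P0 PL in auto)
  qed
  have augle: "l \<le> L \<Longrightarrow> i < d ! l \<Longrightarrow> i < aug_arch d ! l" for l i
    using aug_nth[of l d] aug_last[OF dne] Ldef by (cases "l = L") auto
  have dk: "k < L \<Longrightarrow> d ! k < aug_arch d ! k" for k using aug_nth[of k d] Ldef by auto
  have W1: "(W' ! k) (\<pi> (Suc k) i) (\<pi> k j) = c (Suc k) i * (W ! k) i j / den k j"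
    if k: "k < L" and i: "i < d ! Suc k" and j: "j < d ! k" for k i j
  proof -
    have "(aug_weights d W' b' ! k) (\<pi> (Suc k) i) (\<pi> k j) = c (Suc k) i * (aug_weights d W b ! k) i j / den k j"
      using Wt'[OF k augle[of "Suc k" i] augle[of k j]] k i j by simp
    moreover have "\<pi> (Suc k) i < d ! Suc k" "\<pi> k j < d ! k" using maps k i j by auto
    ultimately show ?thesis using k i j Ldef by (simp add: augw_nth)
  qed
  have B1: "(b' ! k) (\<pi> (Suc k) i) = c (Suc k) i * (b ! k) i"
    if k: "k < L" and i: "i < d ! Suc k" for k i
  proof -
    have "(aug_weights d W' b' ! k) (\<pi> (Suc k) i) (\<pi> k (d!k)) = c (Suc k) i * (aug_weights d W b ! k) i (d!k) / den k (d!k)"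
      using Wt'[OF k augle[of "Suc k" i] dk[OF k]] k i by simp
    moreover have "\<pi> (Suc k) i < d ! Suc k" using maps k i by auto
    moreover have "den k (d!k) = 1" using cone k unfolding den_def by simp
    ultimately show ?thesis using k i Ldef fx[OF k] by (simp add: augw_nth)
  qed
  have bijr: "bij_betw (\<pi> l) {..<d ! l} {..<d ! l} \<and> (\<forall>i<d ! l. c l i \<noteq> 0)" if "l \<in> {1..<L}" for l
  proof -
    have "bij_betw (\<pi> l) {..<d!l} {..<d!l}"
      using bij_restrict[of "\<pi> l" "d!l"] bijall[of l] aug_nth[of l d] fx[of l] that Ldef by auto
    moreover have "\<forall>i<d ! l. c l i \<noteq> 0" using B that aug_nth[of l d] Ldef by auto
    ultimately show ?thesis by blast
  qed
  have wt: "\<forall>l\<in>{1..L}. \<forall>i<d ! l. \<forall>j<d ! (l - 1). (W' ! (l - 1)) (\<pi> l i) (\<pi> (l - 1) j) =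
           c l i * (W ! (l - 1)) i j / (if l = 1 then 1 else c (l - 1) j ^ r ! (l - 2))"
  proof (intro ballI allI impI)
    fix l i j assume l: "l \<in> {1..L}" and i: "i < d ! l" and j: "j < d ! (l - 1)"
    obtain k where lk: "l = Suc k" using l by (cases l) auto
    show "(W' ! (l - 1)) (\<pi> l i) (\<pi> (l - 1) j) =
           c l i * (W ! (l - 1)) i j / (if l = 1 then 1 else c (l - 1) j ^ r ! (l - 2))"
      using W1[of k i j] l i j lk unfolding den_def by (cases k) auto
  qed
  have bi: "\<forall>l\<in>{1..L}. \<forall>i<d ! l. (b' ! (l - 1)) (\<pi> l i) = c l i * (b ! (l - 1)) i"
  proof (intro ballI allI impI)
    fix l i assume l: "l \<in> {1..L}" and i: "i < d ! l"
    obtain k where lk: "l = Suc k" using l by (cases l) auto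
    show "(b' ! (l - 1)) (\<pi> l i) = c l i * (b ! (l - 1)) i"
      using B1[of k i] l i lk by auto
  qed
  show ?thesis unfolding pnn_equiv_def Let_def Ldef[symmetric]
    by (intro exI[of _ \<pi>] exI[of _ c]) (use P0 PL C0 CL bijr wt bi in blast)
qed

end

theorem mainTheorem17:
  fixes d r :: "nat list" and W :: "(nat \<Rightarrow> nat \<Rightarrow> real) list" and b :: "(nat \<Rightarrow> real) list"
  assumes "length d \<ge> 2"
    and "length r = length d - 2"
    and "length W = length d - 1"
    and "length b = length d - 1"
    and "hpnn_unique (aug_arch d) r (aug_weights d W b)"
  shows "pnn_unique d r W b"
  unfolding pnn_unique_def
proof (intro allI impI)
  fix W' b'
  assume lW': "length W' = length d - 1" and lb': "length b' = length d - 1"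
    and eq: "\<forall>x. pnn_eval d r W' b' x = pnn_eval d r W b x"
  have d2: "length d \<ge> 2" by fact
  have heq: "\<And>x. hpnn_eval (aug_arch d) r (aug_weights d W' b') x = hpnn_eval (aug_arch d) r (aug_weights d W b) x"
    using func_eq[OF d2] eq by blast
  obtain \<pi> c where es: "eqsetup d r (aug_weights d W b) (aug_weights d W' b') \<pi> c (length d - 1)"
    using get_setup[OF d2 assms(5) _ heq] by auto
  then have ea: "eqaug d r W b W' b' \<pi> c (length d - 1)" by (simp add: eqaug_def)
  define L where "L = length d - 1"
  have top: "\<pi> (L - 1) (d ! (L - 1)) = d ! (L - 1)"
  proof (cases "L = 1")
    case True then show ?thesis using eqsetup.P0[OF es] by simp
  next
    case False
    then have L2: "length d - 1 \<ge> 2" using d2 unfolding L_def by auto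
    have "L - 1 < L" using d2 unfolding L_def by auto
    from eqaug.chain[OF ea this[unfolded L_def]] obtain i \<gamma> where
      i: "i < aug_arch d ! (L - 1)" "\<pi> (L - 1) i = d ! (L - 1)" and g: "\<gamma> \<noteq> 0"
      and rel: "\<forall>x. fp (aug_arch d) r (aug_weights d W b) (zero_biases (aug_arch d)) (L - 1) x i =
              \<gamma> * fp (aug_arch d) r (aug_weights d W b) (zero_biases (aug_arch d)) (L - 1) x (d ! (L - 1))"
      unfolding L_def by blast
    have Lm: "L - 1 = length d - 2" unfolding L_def by simp
    show ?thesis
    proof (cases "i = d ! (L - 1)")
      case True then show ?thesis using i by simp
    next
      case False
      show ?thesis using no_fail[OF d2 assms(5) L2, of i \<gamma>] i False g rel unfolding Lm by blast
    qed
  qed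
  show "pnn_equiv d r W b W' b'"
    using eqaug.to_pnn_equiv[OF ea] eqaug.fix_all[OF ea] top unfolding L_def by blast
qed


end
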